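(* Let Assumptions A1, A2 and A3 hold. Let the maximal iteration number $T\in\mathbb{N}$ satisfy $T\le\frac{1}{2\eta\gamma^2\varepsilon^2}$, and let the step size satisfy $0<\eta\le\frac{1}{\beta^2\gamma^2}$. Assume the radius $R$ in A3 satisfies $$R\ge2\|r_0\|\max\Big(\eta\gamma\beta\big(1+2\eta\gamma^2(\varepsilon_0^2+\beta\varepsilon)T\big),\ \sqrt T\big(\sqrt\eta+\eta\gamma\sqrt T(\varepsilon+\varepsilon_0+\eta\gamma^2\beta(\varepsilon_0^2+\varepsilon\beta)T)\big)\Big).$$ Then for all $\tau\le T$: $$\|\theta_\tau-\theta_0\|\le\tfrac R2,$$ $$\|\tilde r_\tau-r_\tau\|\le2\eta\gamma^2(\varepsilon_0^2+\beta\varepsilon)\,\tau\,\|r_0\|,$$ $$\|\tilde\theta_\tau-\theta_\tau\|\le\eta\gamma\big(\varepsilon+\varepsilon_0+\eta\gamma^2\beta(\varepsilon_0^2+\varepsilon\beta)\tau\big)\tau\|r_0\|.$$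
   Context: Norms: $\|\cdot\|$ is the Euclidean norm for vectors and the spectral norm for matrices. Setting. Let $f:\mathbb{R}^N\to\mathbb{R}^n$ be continuously differentiable with Jacobian $\mathcal{J}(\theta)\in\mathbb{R}^{n\times N}$. Let $A\in\mathbb{R}^{m\times n}$ and let $\gamma\ge\|A\|$. Fix $y\in\mathbb{R}^m$, a starting point $\theta_0\in\mathbb{R}^N$, and a fixed deterministic "reference Jacobian" $J\in\mathbb{R}^{n\times N}$. Iterations. Gradient descent with step size $\eta>0$ is applied to $\mathcal{L}(\theta)=\frac12\|Af(\theta)-y\|^2$ and to $\mathcal{L}_{\rm lin}(\theta)=\frac12\|Af(\theta_0)+AJ(\theta-\theta_0)-y\|^2$, both started at $\theta_0=\tilde\theta_0$: $$\theta_{\tau+1}=\theta_\tau-\eta\mathcal{J}(\theta_\tau)^\top A^\top r_\tau,\qquad r_\tau:=Af(\theta_\tau)-y,$$ $$\tilde\theta_{\tau+1}=\tilde\theta_\tau-\eta J^\top A^\top\tilde r_\tau,\qquad \tilde r_\tau:=Af(\theta_0)+AJ(\tilde\theta_\tau-\theta_0)-y.$$ Assumption A1: there is $\beta>0$ with $\|J\|\le\beta$ and $\|\mathcal{J}(\theta)\|\le\beta$ for all $\theta\in\mathbb{R}^N$. Assumption A2: there is $\varepsilon_0>0$ with $\|\mathcal{J}(\theta_0)-J\|\le\varepsilon_0$ and $\|\mathcal{J}(\theta_0)\mathcal{J}(\theta_0)^\top-JJ^\top\|\le\varepsilon_0^2$. Assumption A3: there are $\varepsilon>0$ and $R>0$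 with $\|\mathcal{J}(\theta)-\mathcal{J}(\theta_0)\|\le\varepsilon/2$ for all $\theta$ satisfying $\|\theta-\theta_0\|\le R$. *)

theory Defs
  imports "HOL-Analysis.Analysis"
begin

definition spec_norm :: "real^'c^'r \<Rightarrow> real" where
  "spec_norm M = onorm (\<lambda>x. M *v x)"

end

theory Submission
  imports Defs
begin

lemma adj: fixes M :: "real^'c^'r"
  shows "(transpose M *v x) \<bullet> z = x \<bullet> (M *v z)"
  by (simp add: inner_vec_def matrix_vector_mult_def transpose_def sum_distrib_left sum_distrib_right
        mult_ac) (rule sum.swap)

lemma sn_bound: fixes M :: "real^'c^'r"
  shows "norm (M *v x) \<le> spec_norm M * norm x"
  unfolding spec_norm_def by (rule onorm) simp

lemma sn_nonneg: fixes M :: "real^'c^'r" shows "0 \<le> spec_norm M"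
  unfolding spec_norm_def by (rule onorm_pos_le) simp

lemma sn_le: fixes M :: "real^'c^'r"
  assumes "\<And>x. norm (M *v x) \<le> e * norm x" shows "spec_norm M \<le> e"
  unfolding spec_norm_def by (rule onorm_le) (rule assms)

lemma sn_transpose: fixes M :: "real^'c^'r"
  shows "norm (transpose M *v x) \<le> spec_norm M * norm x"
proof -
  define z where "z = transpose M *v x"
  have "norm z ^ 2 = x \<bullet> (M *v z)" unfolding power2_norm_eq_inner
    by (simp only: z_def adj)
  also have "\<dots> \<le> norm x * norm (M *v z)" by (rule norm_cauchy_schwarz)
  also have "\<dots> \<le> norm x * (spec_norm M * norm z)" by (simp add: mult_left_mono sn_bound)
  finally have "norm z * norm z \<le> (spec_norm M * norm x) * norm z" by (simp add: power2_eq_square mult_ac)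
  then show ?thesis unfolding z_def[symmetric]
    by (cases "norm z = 0") (auto simp: sn_nonneg)
qed

lemma transpose_diff': "transpose (M - N) = transpose M - transpose (N :: real^'c^'r)"
  by (simp add: transpose_def vec_eq_iff)

lemma energy:
  fixes A :: "real^'n^'m" and J :: "real^'N^'n"
  assumes "spec_norm A \<le> \<gamma>" "spec_norm J \<le> \<beta>" "0 < \<eta>" "\<eta> * \<beta>^2 * \<gamma>^2 \<le> 1"
  shows "norm (v - \<eta> *\<^sub>R (A *v (J *v (transpose J *v (transpose A *v v)))))^2
     \<le> norm v^2 - \<eta> * norm (transpose J *v (transpose A *v v))^2"
proof -
  define g where "g = transpose J *v (transpose A *v v)"
  define w where "w = A *v (J *v g)"
  have g0: "0 \<le> \<gamma>" "0 \<le> \<beta>" using assms sn_nonneg order_trans by metis+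
  have "v \<bullet> w = (transpose A *v v) \<bullet> (J *v g)" unfolding w_def by (rule adj[symmetric])
  also have "\<dots> = g \<bullet> g" unfolding g_def by (rule adj[symmetric])
  finally have vw: "v \<bullet> w = norm g ^ 2" by (simp add: power2_norm_eq_inner)
  have "norm w \<le> spec_norm A * norm (J *v g)" unfolding w_def by (rule sn_bound)
  also have "\<dots> \<le> \<gamma> * (\<beta> * norm g)"
    by (intro mult_mono order_trans[OF sn_bound] mult_right_mono assms g0) auto
  finally have nw: "norm w \<le> \<gamma> * \<beta> * norm g" by simp
  have nw2: "norm w ^2 \<le> \<gamma>^2 * \<beta>^2 * norm g^2"
    using power_mono[OF nw] by (simp add: power_mult_distrib)
  have e: "norm (v - \<eta> *\<^sub>R w)^2 = norm v^2 - 2*\<eta>*(v \<bullet> w) + \<eta>^2 * norm w^2"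
    by (simp only: power2_norm_eq_inner inner_diff_left inner_diff_right inner_scaleR_left inner_scaleR_right inner_commute[of w v]) (simp add: algebra_simps power2_eq_square)
  have "\<eta>^2 * norm w^2 \<le> \<eta>^2 * (\<gamma>^2 * \<beta>^2 * norm g^2)" using nw2 by (simp add: mult_left_mono)
  also have "\<dots> = \<eta> * (\<eta> * \<beta>^2 * \<gamma>^2) * norm g^2" by (simp add: power2_eq_square mult_ac)
  also have "\<dots> \<le> \<eta> * 1 * norm g^2" using assms by (intro mult_right_mono mult_left_mono) auto
  finally show ?thesis unfolding g_def[symmetric] w_def[symmetric] e vw by simp
qed

lemma sum_sq:
  fixes a b X Y n :: real
  assumes "0 \<le> a" "0 \<le> b" "0 \<le> n" "a^2 \<le> n * X" "b^2 \<le> Y" "0 \<le> X" "n = 0 \<Longrightarrow> a = 0"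
  shows "(a + b)^2 \<le> (n + 1) * (X + Y)"
proof (cases "n = 0")
  case True then show ?thesis using assms by simp
next
  case False
  then have n: "n > 0" using assms by simp
  have "2*n*a*b \<le> a^2 + n^2*b^2" using sum_squares_ge_zero[of "a - n*b" 0] by (simp add: power2_eq_square algebra_simps)
  also have "\<dots> \<le> n * X + n^2 * Y" using assms by (intro add_mono mult_left_mono) auto
  finally have "n * (2*a*b) \<le> n * (X + n*Y)" by (simp add: algebra_simps power2_eq_square)
  then have "2*a*b \<le> X + n * Y" using n by simp
  then show ?thesis using assms by (simp add: power2_eq_square algebra_simps)
qed

lemma mv_neg: "(M::real^'c^'r) *v (- x) = - (M *v x)"
  by (simp add: matrix_vector_mult_def vec_eq_iff sum_negf)

lemma cs_step:
  fixes x q G b \<eta> P :: real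
  assumes "0 \<le> q" "0 \<le> G" "0 < \<eta>" "q^2 \<le> P - \<eta> * G^2" "0 \<le> x" "x \<le> q + b*\<eta>*G"
  shows "x^2 \<le> (1 + \<eta>*b^2) * P"
proof -
  have "x^2 \<le> (q + b*\<eta>*G)^2" using assms by (intro power_mono) auto
  also have "\<dots> = (1 + \<eta>*b^2)*(q^2 + \<eta>*G^2) - \<eta>*(b*q - G)^2" by (simp add: power2_eq_square algebra_simps)
  also have "\<dots> \<le> (1 + \<eta>*b^2)*(q^2 + \<eta>*G^2)" using assms by simp
  also have "\<dots> \<le> (1 + \<eta>*b^2)*P" using assms by (intro mult_left_mono) auto
  finally show ?thesis .
qed

lemma tri4: "norm ((a::'a::real_normed_vector) + b + c - d) \<le> norm a + norm b + norm c + norm d"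
  using norm_triangle_ineq4[of "a+b+c" d] norm_triangle_ineq[of "a+b" c] norm_triangle_ineq[of a b] by linarith

lemma tri3: "norm ((a::'a::real_normed_vector) - b - c) \<le> norm a + norm b + norm c"
  using norm_triangle_ineq4[of "a-b" c] norm_triangle_ineq4[of a b] by linarith

lemma in_cball: "norm (x - c) \<le> R \<Longrightarrow> x \<in> cball c R"
  by (simp add: dist_norm norm_minus_commute)

lemma cball_norm: "x \<in> cball c R \<Longrightarrow> norm (x - c) \<le> R"
  by (simp add: dist_norm norm_minus_commute)

lemma sc: "0 < (\<eta>::real) \<Longrightarrow> norm x \<le> B \<Longrightarrow> norm (\<eta> *\<^sub>R x) \<le> \<eta> * B"
  by (simp add: mult_left_mono)

lemma sq_le: "(x::real)^2 \<le> y^2 \<Longrightarrow> 0 \<le> y \<Longrightarrow> x \<le> y"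
  using power2_le_imp_le by blast

theorem theorem3p1:
  fixes f :: "real^'N \<Rightarrow> real^'n"
    and Jf :: "real^'N \<Rightarrow> real^'N^'n"
    and A :: "real^'n^'m"
    and J :: "real^'N^'n"
    and y :: "real^'m"
    and \<theta>0 :: "real^'N"
    and \<theta> \<theta>t :: "nat \<Rightarrow> real^'N"
    and \<gamma> \<eta> \<beta> \<epsilon>0 \<epsilon> R :: real
    and T :: nat
  assumes deriv: "\<And>x. (f has_derivative (\<lambda>h. Jf x *v h)) (at x)"
    and Jcont: "continuous_on UNIV Jf"
    and gamma: "spec_norm A \<le> \<gamma>"
    and eta_pos: "0 < \<eta>"
    and theta0: "\<theta> 0 = \<theta>0"
    and theta_step: "\<And>\<tau>. \<theta> (Suc \<tau>) = \<theta> \<tau> - \<eta> *\<^sub>R (transpose (Jf (\<theta> \<tau>)) *v (transpose A *v (A *v f (\<theta> \<tau>) - y)))"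
    and thetat0: "\<theta>t 0 = \<theta>0"
    and thetat_step: "\<And>\<tau>. \<theta>t (Suc \<tau>) = \<theta>t \<tau> - \<eta> *\<^sub>R (transpose J *v (transpose A *v
           (A *v f \<theta>0 + A *v (J *v (\<theta>t \<tau> - \<theta>0)) - y)))"
    and A1_beta: "\<beta> > 0"
    and A1_J: "spec_norm J \<le> \<beta>"
    and A1_Jf: "\<And>x. spec_norm (Jf x) \<le> \<beta>"
    and A2_pos: "\<epsilon>0 > 0"
    and A2_1: "spec_norm (Jf \<theta>0 - J) \<le> \<epsilon>0"
    and A2_2: "spec_norm (Jf \<theta>0 ** transpose (Jf \<theta>0) - J ** transpose J) \<le> \<epsilon>0 ^ 2"
    and A3_pos: "\<epsilon> > 0" "R > 0"
    and A3: "\<And>x. norm (x - \<theta>0) \<le> R \<Longrightarrow> spec_norm (Jf x - Jf \<theta>0) \<le> \<epsilon> / 2"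
    and T_bound: "2 * \<eta> * \<gamma>^2 * \<epsilon>^2 * real T \<le> 1"
    and eta_bound: "\<eta> * \<beta>^2 * \<gamma>^2 \<le> 1"
    and R_bound: "R \<ge> 2 * norm (A *v f \<theta>0 - y) *
        max (\<eta> * \<gamma> * \<beta> * (1 + 2 * \<eta> * \<gamma>^2 * (\<epsilon>0^2 + \<beta> * \<epsilon>) * real T))
            (sqrt (real T) * (sqrt \<eta> + \<eta> * \<gamma> * sqrt (real T) *
               (\<epsilon> + \<epsilon>0 + \<eta> * \<gamma>^2 * \<beta> * (\<epsilon>0^2 + \<epsilon> * \<beta>) * real T)))"
  shows "\<forall>\<tau>\<le>T.
     norm (\<theta> \<tau> - \<theta>0) \<le> R / 2 \<and>
     norm ((A *v f \<theta>0 + A *v (J *v (\<theta>t \<tau> - \<theta>0)) - y) - (A *v f (\<theta> \<tau>) - y))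
        \<le> 2 * \<eta> * \<gamma>^2 * (\<epsilon>0^2 + \<beta> * \<epsilon>) * real \<tau> * norm (A *v f \<theta>0 - y) \<and>
     norm (\<theta>t \<tau> - \<theta> \<tau>)
        \<le> \<eta> * \<gamma> * (\<epsilon> + \<epsilon>0 + \<eta> * \<gamma>^2 * \<beta> * (\<epsilon>0^2 + \<epsilon> * \<beta>) * real \<tau>) * real \<tau> * norm (A *v f \<theta>0 - y)"
proof -
  define \<rho> where "\<rho> = norm (A *v f \<theta>0 - y)"
  define r where "r \<tau> = A *v f (\<theta> \<tau>) - y" for \<tau>
  define rt where "rt \<tau> = A *v f \<theta>0 + A *v (J *v (\<theta>t \<tau> - \<theta>0)) - y" for \<tau>
  define K where "K = Jf \<theta>0"
  define c where "c = \<eta>*\<gamma>^2*(\<epsilon>0^2+\<beta>*\<epsilon>)"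
  define D where "D = \<eta>*\<gamma>^2*\<beta>*(\<epsilon>0^2+\<epsilon>*\<beta>)"
  define a where "a = \<eta>*\<gamma>^2*\<epsilon>^2"
  define Q where "Q \<tau> \<longleftrightarrow> norm (\<theta> \<tau> - \<theta>0) \<le> R/2 \<and> norm (rt \<tau> - r \<tau>) \<le> 2*c*real \<tau>*\<rho>
     \<and> norm (\<theta>t \<tau> - \<theta> \<tau>) \<le> \<eta>*\<gamma>*(\<epsilon>+\<epsilon>0+D*real \<tau>)*real \<tau>*\<rho>
     \<and> norm (r \<tau>)^2 \<le> (1+a)^\<tau> * \<rho>^2 \<and> norm (rt \<tau>) \<le> \<rho>
     \<and> norm (\<theta>t \<tau> - \<theta>0)^2 \<le> real \<tau> * \<eta> * (\<rho>^2 - norm (rt \<tau>)^2)" for \<tau>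
  have g0: "0 \<le> \<gamma>" using gamma sn_nonneg order_trans by metis
  have rho0: "0 \<le> \<rho>" by (simp add: \<rho>_def)
  have c0: "0 \<le> c" "0 \<le> D" "0 \<le> a"
    using eta_pos A1_beta A2_pos A3_pos g0
    by (auto simp: c_def D_def a_def intro!: mult_nonneg_nonneg add_nonneg_nonneg)
  have DC: "D = \<beta> * c" by (simp add: c_def D_def algebra_simps)
  have Q0: "Q 0" using A3_pos by (simp add: Q_def r_def rt_def theta0 thetat0 \<rho>_def)
  have Tpow: "(1+a)^\<tau> \<le> 2" if "\<tau> \<le> T" for \<tau>
  proof -
    have "(1+a)^\<tau> \<le> exp a ^ \<tau>" by (rule power_mono) (use c0 in auto)
    also have "\<dots> = exp (real \<tau> * a)" by (simp add: exp_of_nat_mult)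
    also have "\<dots> \<le> 2"
    proof -
      have "real \<tau> * a \<le> real T * a" using that c0 by (intro mult_right_mono) auto
      also have "\<dots> \<le> 1/2" using T_bound by (simp add: a_def algebra_simps)
      finally have "norm (real \<tau> * a) \<le> 1/2" using c0 by simp
      from exp_bound_half[OF this] show ?thesis by simp
    qed
    finally show ?thesis .
  qed
  have Rb1: "\<rho> * (\<eta> * \<gamma> * \<beta> * (1 + 2 * \<eta> * \<gamma>^2 * (\<epsilon>0^2 + \<beta> * \<epsilon>) * real T)) \<le> R/2"
  proof -
    have "\<rho> * (\<eta> * \<gamma> * \<beta> * (1 + 2 * \<eta> * \<gamma>^2 * (\<epsilon>0^2 + \<beta> * \<epsilon>) * real T)) \<le> \<rho> * max (\<eta> * \<gamma> * \<beta> * (1 + 2 * \<eta> * \<gamma>^2 * (\<epsilon>0^2 + \<beta> * \<epsilon>) * real T)) (sqrt (real T) * (sqrt \<eta> + \<eta> * \<gamma> * sqrt (real T) *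
               (\<epsilon> + \<epsilon>0 + \<eta> * \<gamma>^2 * \<beta> * (\<epsilon>0^2 + \<epsilon> * \<beta>) * real T)))" by (rule mult_left_mono) (simp_all add: rho0)
    then show ?thesis using R_bound[folded \<rho>_def] by linarith
  qed
  have Rb2: "\<rho> * (sqrt (real T) * (sqrt \<eta> + \<eta> * \<gamma> * sqrt (real T) *
               (\<epsilon> + \<epsilon>0 + \<eta> * \<gamma>^2 * \<beta> * (\<epsilon>0^2 + \<epsilon> * \<beta>) * real T))) \<le> R/2"
  proof -
    have "\<rho> * (sqrt (real T) * (sqrt \<eta> + \<eta> * \<gamma> * sqrt (real T) *
               (\<epsilon> + \<epsilon>0 + \<eta> * \<gamma>^2 * \<beta> * (\<epsilon>0^2 + \<epsilon> * \<beta>) * real T))) \<le> \<rho> * max (\<eta> * \<gamma> * \<beta> * (1 + 2 * \<eta> * \<gamma>^2 * (\<epsilon>0^2 + \<beta> * \<epsilon>) * real T)) (sqrt (real T) * (sqrt \<eta> + \<eta> * \<gamma> * sqrt (real T) *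
               (\<epsilon> + \<epsilon>0 + \<eta> * \<gamma>^2 * \<beta> * (\<epsilon>0^2 + \<epsilon> * \<beta>) * real T)))" by (rule mult_left_mono) (simp_all add: rho0)
    then show ?thesis using R_bound[folded \<rho>_def] by linarith
  qed
  have derivS: "\<And>x. x \<in> cball \<theta>0 R \<Longrightarrow> (f has_derivative (\<lambda>h. Jf x *v h)) (at x within cball \<theta>0 R)"
    using deriv has_derivative_at_withinI by blast
  have step: "Q (Suc \<tau>)" if ST: "Suc \<tau> \<le> T" and Qt: "Q \<tau>" for \<tau>
  proof -
    from Qt have I1: "norm (\<theta> \<tau> - \<theta>0) \<le> R/2" and I2: "norm (rt \<tau> - r \<tau>) \<le> 2*c*real \<tau>*\<rho>"
      and I3: "norm (\<theta>t \<tau> - \<theta> \<tau>) \<le> \<eta>*\<gamma>*(\<epsilon>+\<epsilon>0+D*real \<tau>)*real \<tau>*\<rho>"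
      and I4: "norm (r \<tau>)^2 \<le> (1+a)^\<tau> * \<rho>^2" and I5: "norm (rt \<tau>) \<le> \<rho>"
      and I6: "norm (\<theta>t \<tau> - \<theta>0)^2 \<le> real \<tau> * \<eta> * (\<rho>^2 - norm (rt \<tau>)^2)"
      unfolding Q_def by auto
    define Jt where "Jt = Jf (\<theta> \<tau>)"
    define g where "g = transpose Jt *v (transpose A *v r \<tau>)"
    define s where "s = \<theta> (Suc \<tau>) - \<theta> \<tau>"
    have s_eq: "s = - (\<eta> *\<^sub>R g)" using theta_step[of \<tau>] by (simp add: s_def g_def Jt_def r_def)
    have JtK: "spec_norm (Jt - K) \<le> \<epsilon>/2" unfolding Jt_def K_def using A3 I1 A3_pos by simp
    have nr: "norm (r \<tau>) \<le> (1 + 2*c*real T)*\<rho>"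
    proof -
      have "norm (r \<tau>) \<le> norm (rt \<tau>) + norm (rt \<tau> - r \<tau>)"
        using norm_triangle_ineq4[of "rt \<tau>" "rt \<tau> - r \<tau>"] by simp
      also have "\<dots> \<le> \<rho> + 2*c*real T*\<rho>"
      proof -
        have "2*c*real \<tau>*\<rho> \<le> 2*c*real T*\<rho>" using c0 rho0 ST
          by (intro mult_right_mono mult_left_mono) auto
        then show ?thesis using I5 I2 by linarith
      qed
      finally show ?thesis by (simp add: algebra_simps)
    qed
    have ng: "norm g \<le> \<beta>*(\<gamma>*norm (r \<tau>))"
    proof -
      have z1: "norm (transpose A *v r \<tau>) \<le> \<gamma> * norm (r \<tau>)"
        by (rule order_trans[OF sn_transpose mult_right_mono[OF gamma norm_ge_zero]])
      show ?thesis unfolding g_def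
        by (rule order_trans[OF sn_transpose mult_mono[OF A1_Jf[of "\<theta> \<tau>", folded Jt_def] z1]])
           (use A1_beta in auto)
    qed
    have ns: "norm s \<le> \<eta>*\<beta>*\<gamma>*norm (r \<tau>)" using ng eta_pos
      by (simp add: s_eq mult_left_mono mult.assoc)
    have ns_g: "norm s = \<eta> * norm g" using eta_pos by (simp add: s_eq)
    have ns2: "norm s \<le> R/2"
    proof -
      have "norm s \<le> \<eta>*\<beta>*\<gamma>*((1 + 2*c*real T)*\<rho>)"
        proof -
          have "\<eta>*\<beta>*\<gamma> * norm (r \<tau>) \<le> \<eta>*\<beta>*\<gamma> * ((1 + 2*c*real T)*\<rho>)"
            by (rule mult_left_mono[OF nr]) (use eta_pos A1_beta g0 in simp)
          then show ?thesis using ns by linarith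
        qed
      also have "\<dots> = \<rho> * (\<eta> * \<gamma> * \<beta> * (1 + 2 * \<eta> * \<gamma>^2 * (\<epsilon>0^2 + \<beta> * \<epsilon>) * real T))"
        by (simp add: c_def algebra_simps)
      also have "\<dots> \<le> R/2" by (rule Rb1)
      finally show ?thesis .
    qed
    have seg: "\<theta> \<tau> + t *\<^sub>R (\<theta> (Suc \<tau>) - \<theta> \<tau>) \<in> cball \<theta>0 R" if "t \<in> {0..1}" for t
    proof -
      have "norm (\<theta> \<tau> + t *\<^sub>R s - \<theta>0) \<le> norm (\<theta> \<tau> - \<theta>0) + norm (t *\<^sub>R s)"
      proof -
        have eq: "\<theta> \<tau> + t *\<^sub>R s - \<theta>0 = (\<theta> \<tau> - \<theta>0) + t *\<^sub>R s" by (simp add: algebra_simps)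
        show ?thesis unfolding eq by (rule norm_triangle_ineq)
      qed
      also have "\<dots> \<le> R/2 + R/2"
      proof -
        have "\<bar>t\<bar> * norm s \<le> 1 * norm s" by (rule mult_right_mono) (use that in auto)
        then show ?thesis using I1 ns2 by simp
      qed
      finally have "norm (\<theta> \<tau> + t *\<^sub>R s - \<theta>0) \<le> R" by simp
      then show ?thesis unfolding s_def by (rule in_cball)
    qed
    have inS1: "\<theta> \<tau> \<in> cball \<theta>0 R" by (rule in_cball) (use I1 A3_pos in linarith)
    have inS2: "\<theta>0 \<in> cball \<theta>0 R" using A3_pos by simp
    note inS = inS1 inS2
    have fd: "(\<lambda>h. Jf x *v h) - (\<lambda>h. Jf z *v h) = (\<lambda>h. (Jf x - Jf z) *v h)" for x z
      by (rule ext) (simp add: algebra_simps)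
    define \<delta>0 where "\<delta>0 = f (\<theta> (Suc \<tau>)) - f (\<theta> \<tau>) - K *v s"
    define \<delta>1 where "\<delta>1 = f (\<theta> (Suc \<tau>)) - f (\<theta> \<tau>) - Jt *v s"
    have del0: "norm \<delta>0 \<le> norm s * (\<epsilon>/2)"
      unfolding \<delta>0_def s_def K_def
    proof (rule differentiable_bound_linearization[where S="cball \<theta>0 R" and f'="\<lambda>x h. Jf x *v h"])
      show "\<And>t. t \<in> {0..1} \<Longrightarrow> \<theta> \<tau> + t *\<^sub>R (\<theta> (Suc \<tau>) - \<theta> \<tau>) \<in> cball \<theta>0 R" by (rule seg)
      show "\<And>x. x \<in> cball \<theta>0 R \<Longrightarrow> (f has_derivative (\<lambda>h. Jf x *v h)) (at x within cball \<theta>0 R)" by (rule derivS)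
      show "\<theta>0 \<in> cball \<theta>0 R" by (rule inS)
      show "onorm ((\<lambda>h. Jf x *v h) - (\<lambda>h. Jf \<theta>0 *v h)) \<le> \<epsilon> / 2" if "x \<in> cball \<theta>0 R" for x
        unfolding fd spec_norm_def[symmetric] using A3 cball_norm[OF that] by simp
    qed
    have del1: "norm \<delta>1 \<le> norm s * \<epsilon>"
      unfolding \<delta>1_def s_def Jt_def
    proof (rule differentiable_bound_linearization[where S="cball \<theta>0 R" and f'="\<lambda>x h. Jf x *v h"])
      show "\<And>t. t \<in> {0..1} \<Longrightarrow> \<theta> \<tau> + t *\<^sub>R (\<theta> (Suc \<tau>) - \<theta> \<tau>) \<in> cball \<theta>0 R" by (rule seg)
      show "\<And>x. x \<in> cball \<theta>0 R \<Longrightarrow> (f has_derivative (\<lambda>h. Jf x *v h)) (at x within cball \<theta>0 R)" by (rule derivS)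
      show "\<theta> \<tau> \<in> cball \<theta>0 R" by (rule inS)
      show "onorm ((\<lambda>h. Jf x *v h) - (\<lambda>h. Jf (\<theta> \<tau>) *v h)) \<le> \<epsilon>" if "x \<in> cball \<theta>0 R" for x
        unfolding fd spec_norm_def[symmetric]
      proof (rule sn_le)
        fix h
        have "(Jf x - Jf (\<theta> \<tau>)) *v h = (Jf x - K) *v h - (Jt - K) *v h"
          by (simp add: Jt_def algebra_simps)
        also have "norm \<dots> \<le> norm ((Jf x - K) *v h) + norm ((Jt - K) *v h)" by (rule norm_triangle_ineq4)
        also have "\<dots> \<le> (\<epsilon>/2) * norm h + (\<epsilon>/2) * norm h"
          using A3[OF cball_norm[OF that]] JtK
          by (intro add_mono order_trans[OF sn_bound] mult_right_mono) (auto simp: K_def)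
        finally show "norm ((Jf x - Jf (\<theta> \<tau>)) *v h) \<le> \<epsilon> * norm h" by simp
      qed
    qed
    have r_eq: "r (Suc \<tau>) = (r \<tau> - \<eta> *\<^sub>R (A *v (Jt *v g))) + A *v \<delta>1"
    proof -
      have "r (Suc \<tau>) = r \<tau> + A *v (Jt *v s) + A *v \<delta>1" by (simp add: r_def \<delta>1_def s_def algebra_simps)
      then show ?thesis by (simp add: s_eq mv_neg algebra_simps)
    qed
    have en1: "norm (r \<tau> - \<eta> *\<^sub>R (A *v (Jt *v g)))^2 \<le> norm (r \<tau>)^2 - \<eta> * norm g^2"
      unfolding g_def Jt_def by (rule energy[OF gamma A1_Jf eta_pos eta_bound])
    have nAd: "norm (A *v \<delta>1) \<le> \<gamma> * \<epsilon> * \<eta> * norm g"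
    proof -
      have "norm (A *v \<delta>1) \<le> \<gamma> * (norm s * \<epsilon>)"
        using del1 g0 by (intro order_trans[OF sn_bound] mult_mono gamma) auto
      then show ?thesis by (simp add: ns_g mult_ac)
    qed
    have nr1: "norm (r (Suc \<tau>)) \<le> norm (r \<tau> - \<eta> *\<^sub>R (A *v (Jt *v g))) + \<gamma> * \<epsilon> * \<eta> * norm g"
      unfolding r_eq using norm_triangle_ineq[of "r \<tau> - \<eta> *\<^sub>R (A *v (Jt *v g))" "A *v \<delta>1"] nAd by linarith
    have R4: "norm (r (Suc \<tau>))^2 \<le> (1+a)^(Suc \<tau>) * \<rho>^2"
    proof -
      have "norm (r (Suc \<tau>))^2 \<le> (1 + \<eta>*(\<gamma>*\<epsilon>)^2) * norm (r \<tau>)^2"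
        by (rule cs_step[OF norm_ge_zero norm_ge_zero eta_pos en1 norm_ge_zero]) (use nr1 in \<open>simp add: mult_ac\<close>)
      also have "\<dots> \<le> (1+a) * ((1+a)^\<tau> * \<rho>^2)" 
      proof -
        have "1 + \<eta>*(\<gamma>*\<epsilon>)^2 = 1+a" by (simp add: a_def power_mult_distrib)
        then show ?thesis using I4 c0 by (simp add: mult_left_mono)
      qed
      finally show ?thesis by (simp add: mult_ac)
    qed
    have rle: "norm (r \<tau>) \<le> 2 * \<rho>"
    proof (rule sq_le)
      have "norm (r \<tau>)^2 \<le> 2 * \<rho>^2" using I4 mult_right_mono[OF Tpow[of \<tau>] zero_le_power2[of \<rho>]] ST by simp
      moreover have "(2*\<rho>)^2 = 4*\<rho>^2" by (simp add: power_mult_distrib)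
      ultimately show "norm (r \<tau>)^2 \<le> (2*\<rho>)^2" using zero_le_power2[of \<rho>] by linarith
    qed (use rho0 in simp)
    define gt where "gt = transpose J *v (transpose A *v rt \<tau>)"
    have thetat_eq: "\<theta>t (Suc \<tau>) = \<theta>t \<tau> - \<eta> *\<^sub>R gt"
      using thetat_step[of \<tau>] by (simp add: gt_def rt_def)
    have rt_eq: "rt (Suc \<tau>) = rt \<tau> - \<eta> *\<^sub>R (A *v (J *v gt))"
      by (simp add: rt_def thetat_eq algebra_simps)
    have en2: "norm (rt (Suc \<tau>))^2 \<le> norm (rt \<tau>)^2 - \<eta> * norm gt^2"
      unfolding rt_eq gt_def by (rule energy[OF gamma A1_J eta_pos eta_bound])
    have R5: "norm (rt (Suc \<tau>)) \<le> \<rho>"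
    proof (rule sq_le)
      have "\<eta> * norm gt^2 \<ge> 0" using eta_pos by simp
      then show "norm (rt (Suc \<tau>))^2 \<le> \<rho>^2" using en2 I5 power_mono[OF I5 norm_ge_zero, of 2] by linarith
    qed (rule rho0)
    have R6: "norm (\<theta>t (Suc \<tau>) - \<theta>0)^2 \<le> real (Suc \<tau>) * \<eta> * (\<rho>^2 - norm (rt (Suc \<tau>))^2)"
    proof -
      have "norm (\<theta>t (Suc \<tau>) - \<theta>0) \<le> norm (\<theta>t \<tau> - \<theta>0) + norm (\<eta> *\<^sub>R gt)"
        unfolding thetat_eq using norm_triangle_ineq4[of "\<theta>t \<tau> - \<theta>0" "\<eta> *\<^sub>R gt"] by (simp add: algebra_simps)
      then have "norm (\<theta>t (Suc \<tau>) - \<theta>0)^2 \<le> (norm (\<theta>t \<tau> - \<theta>0) + \<eta> * norm gt)^2"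
        using eta_pos by (intro power_mono) auto
      also have "\<dots> \<le> (real \<tau> + 1) * (\<eta> * (\<rho>^2 - norm (rt \<tau>)^2) + \<eta> * (norm (rt \<tau>)^2 - norm (rt (Suc \<tau>))^2))"
      proof (rule sum_sq)
        show "(\<eta> * norm gt)^2 \<le> \<eta> * (norm (rt \<tau>)^2 - norm (rt (Suc \<tau>))^2)"
        proof -
          have "\<eta> * norm gt^2 \<le> norm (rt \<tau>)^2 - norm (rt (Suc \<tau>))^2" using en2 by linarith
          then have "\<eta> * (\<eta> * norm gt^2) \<le> \<eta> * (norm (rt \<tau>)^2 - norm (rt (Suc \<tau>))^2)"
            by (rule mult_left_mono) (use eta_pos in simp)
          moreover have "(\<eta> * norm gt)^2 = \<eta> * (\<eta> * norm gt^2)" by (simp add: power2_eq_square)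
          ultimately show ?thesis by linarith
        qed
        show "norm (\<theta>t \<tau> - \<theta>0)^2 \<le> real \<tau> * (\<eta> * (\<rho>^2 - norm (rt \<tau>)^2))" using I6 by (simp add: mult_ac)
        show "0 \<le> \<eta> * (\<rho>^2 - norm (rt \<tau>)^2)" using eta_pos power_mono[OF I5 norm_ge_zero, of 2] by simp
        show "real \<tau> = 0 \<Longrightarrow> norm (\<theta>t \<tau> - \<theta>0) = 0" using I6 by simp
      qed (use eta_pos in auto)
      also have "\<dots> = real (Suc \<tau>) * \<eta> * (\<rho>^2 - norm (rt (Suc \<tau>))^2)" by (simp add: algebra_simps)
      finally show ?thesis .
    qed
    define e where "e = rt \<tau> - r \<tau>"
    define z where "z = transpose A *v r \<tau>"
    have h2: "r (Suc \<tau>) = r \<tau> + A *v (K *v s) + A *v \<delta>0" by (simp add: r_def \<delta>0_def s_def algebra_simps)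
    have h3: "K *v s = - (\<eta> *\<^sub>R (K *v (transpose K *v z))) - \<eta> *\<^sub>R (K *v (transpose (Jt - K) *v z))"
    proof -
      have "transpose Jt = transpose K + transpose (Jt - K)" by (simp add: transpose_diff')
      then have "g = transpose K *v z + transpose (Jt - K) *v z" by (simp add: g_def z_def algebra_simps)
      then show ?thesis by (simp add: s_eq mv_neg algebra_simps)
    qed
    have e_eq: "rt (Suc \<tau>) - r (Suc \<tau>) = (e - \<eta> *\<^sub>R (A *v (J *v (transpose J *v (transpose A *v e)))))
        + \<eta> *\<^sub>R (A *v ((K ** transpose K - J ** transpose J) *v z))
        + \<eta> *\<^sub>R (A *v (K *v (transpose (Jt - K) *v z))) - A *v \<delta>0"
    proof -
      have "rt (Suc \<tau>) = rt \<tau> - \<eta> *\<^sub>R (A *v (J *v (transpose J *v (transpose A *v rt \<tau>))))"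
        by (simp add: rt_eq gt_def)
      moreover have "rt \<tau> = e + r \<tau>" by (simp add: e_def)
      ultimately have "rt (Suc \<tau>) = e + r \<tau> - \<eta> *\<^sub>R (A *v (J *v (transpose J *v (transpose A *v e))))
          - \<eta> *\<^sub>R (A *v (J *v (transpose J *v z)))"
        by (simp add: z_def algebra_simps)
      then show ?thesis unfolding h2 h3
        by (simp add: algebra_simps matrix_vector_mul_assoc[symmetric] mv_neg)
    qed
    have nz: "norm z \<le> \<gamma> * norm (r \<tau>)" unfolding z_def by (rule order_trans[OF sn_transpose mult_right_mono[OF gamma norm_ge_zero]])
    have nE1: "norm (e - \<eta> *\<^sub>R (A *v (J *v (transpose J *v (transpose A *v e))))) \<le> norm e"
    proof (rule sq_le)
      have "\<eta> * norm (transpose J *v (transpose A *v e))^2 \<ge> 0" using eta_pos by simp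
      then show "norm (e - \<eta> *\<^sub>R (A *v (J *v (transpose J *v (transpose A *v e)))))^2 \<le> norm e ^2"
        using energy[OF gamma A1_J eta_pos eta_bound, of e] by linarith
    qed simp
    have nE2: "norm (\<eta> *\<^sub>R (A *v ((K ** transpose K - J ** transpose J) *v z))) \<le> \<eta> * (\<gamma> * (\<epsilon>0^2 * (\<gamma> * norm (r \<tau>))))"
      using eta_pos g0 nz A2_2[folded K_def]
      by (auto intro!: mult_left_mono order_trans[OF sn_bound] mult_mono gamma)
    have a1: "norm (transpose (Jt - K) *v z) \<le> (\<epsilon>/2) * (\<gamma> * norm (r \<tau>))"
      by (rule order_trans[OF sn_transpose mult_mono[OF JtK nz]]) (use A3_pos in auto)
    have a2: "norm (K *v (transpose (Jt - K) *v z)) \<le> \<beta> * ((\<epsilon>/2) * (\<gamma> * norm (r \<tau>)))"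
      by (rule order_trans[OF sn_bound mult_mono[OF A1_Jf[of \<theta>0, folded K_def] a1]]) (use A1_beta in auto)
    have a3: "norm (A *v (K *v (transpose (Jt - K) *v z))) \<le> \<gamma> * (\<beta> * ((\<epsilon>/2) * (\<gamma> * norm (r \<tau>))))"
      by (rule order_trans[OF sn_bound mult_mono[OF gamma a2]]) (use g0 in auto)
    have nE3: "norm (\<eta> *\<^sub>R (A *v (K *v (transpose (Jt - K) *v z)))) \<le> \<eta> * (\<gamma> * (\<beta> * ((\<epsilon>/2) * (\<gamma> * norm (r \<tau>)))))"
      by (rule sc[OF eta_pos a3])
    have b1: "norm \<delta>0 \<le> (\<eta>*\<beta>*\<gamma>*norm (r \<tau>)) * (\<epsilon>/2)"
      by (rule order_trans[OF del0 mult_right_mono[OF ns]]) (use A3_pos in auto)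
    have nE4: "norm (A *v \<delta>0) \<le> \<gamma> * ((\<eta>*\<beta>*\<gamma>*norm (r \<tau>)) * (\<epsilon>/2))"
      by (rule order_trans[OF sn_bound mult_mono[OF gamma b1]]) (use g0 in auto)
    have R2: "norm (rt (Suc \<tau>) - r (Suc \<tau>)) \<le> 2*c*real (Suc \<tau>)*\<rho>"
    proof -
      have "norm (rt (Suc \<tau>) - r (Suc \<tau>)) \<le> norm e + c * norm (r \<tau>)"
        unfolding e_eq
      proof (rule order_trans[OF tri4])
        have "\<eta> * (\<gamma> * (\<epsilon>0^2 * (\<gamma> * norm (r \<tau>)))) + \<eta> * (\<gamma> * (\<beta> * ((\<epsilon>/2) * (\<gamma> * norm (r \<tau>)))))
             + \<gamma> * ((\<eta>*\<beta>*\<gamma>*norm (r \<tau>)) * (\<epsilon>/2)) = c * norm (r \<tau>)"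
          by (simp add: c_def algebra_simps power2_eq_square)
        then show "norm (e - \<eta> *\<^sub>R (A *v (J *v (transpose J *v (transpose A *v e))))) +
          norm (\<eta> *\<^sub>R (A *v ((K ** transpose K - J ** transpose J) *v z))) +
          norm (\<eta> *\<^sub>R (A *v (K *v (transpose (Jt - K) *v z)))) + norm (A *v \<delta>0)
          \<le> norm e + c * norm (r \<tau>)" using nE1 nE2 nE3 nE4 by linarith
      qed
      also have "\<dots> \<le> 2*c*real \<tau>*\<rho> + c * (2*\<rho>)" using I2 rle c0 unfolding e_def
        by (intro add_mono mult_left_mono) auto
      finally show ?thesis by (simp add: algebra_simps)
    qed
    have JJt: "spec_norm (J - Jt) \<le> \<epsilon>0 + \<epsilon>/2"
    proof (rule sn_le)
      fix h
      have "(J - Jt) *v h = - ((K - J) *v h) - ((Jt - K) *v h)" by (simp add: algebra_simps)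
      also have "norm \<dots> \<le> norm ((K - J) *v h) + norm ((Jt - K) *v h)"
        by (metis norm_minus_cancel norm_triangle_ineq4)
      also have "\<dots> \<le> \<epsilon>0 * norm h + (\<epsilon>/2) * norm h"
        using A2_1[folded K_def] JtK by (intro add_mono order_trans[OF sn_bound] mult_right_mono) auto
      finally show "norm ((J - Jt) *v h) \<le> (\<epsilon>0 + \<epsilon>/2) * norm h" by (simp add: algebra_simps)
    qed
    have d_eq: "\<theta>t (Suc \<tau>) - \<theta> (Suc \<tau>) = (\<theta>t \<tau> - \<theta> \<tau>) - \<eta> *\<^sub>R (transpose (J - Jt) *v (transpose A *v rt \<tau>))
        - \<eta> *\<^sub>R (transpose Jt *v (transpose A *v e))"
    proof -
      have "\<theta> (Suc \<tau>) = \<theta> \<tau> - \<eta> *\<^sub>R g" using s_eq s_def by (simp add: algebra_simps)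
      then show ?thesis unfolding thetat_eq
        by (simp add: gt_def g_def e_def transpose_diff' algebra_simps)
    qed
    have c1: "norm (transpose A *v rt \<tau>) \<le> \<gamma> * \<rho>"
      by (rule order_trans[OF sn_transpose mult_mono[OF gamma I5]]) (use g0 in auto)
    have c2: "norm (transpose (J - Jt) *v (transpose A *v rt \<tau>)) \<le> (\<epsilon>0 + \<epsilon>/2) * (\<gamma> * \<rho>)"
      by (rule order_trans[OF sn_transpose mult_mono[OF JJt c1]]) (use A2_pos A3_pos in auto)
    have nD1: "norm (\<eta> *\<^sub>R (transpose (J - Jt) *v (transpose A *v rt \<tau>))) \<le> \<eta> * ((\<epsilon>0 + \<epsilon>/2) * (\<gamma> * \<rho>))"
      by (rule sc[OF eta_pos c2])
    have e1: "norm (transpose A *v e) \<le> \<gamma> * (2*c*real \<tau>*\<rho>)"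
      by (rule order_trans[OF sn_transpose mult_mono[OF gamma I2[folded e_def]]]) (use g0 in auto)
    have e2: "norm (transpose Jt *v (transpose A *v e)) \<le> \<beta> * (\<gamma> * (2*c*real \<tau>*\<rho>))"
      by (rule order_trans[OF sn_transpose mult_mono[OF A1_Jf[of "\<theta> \<tau>", folded Jt_def] e1]]) (use A1_beta in auto)
    have nD2: "norm (\<eta> *\<^sub>R (transpose Jt *v (transpose A *v e))) \<le> \<eta> * (\<beta> * (\<gamma> * (2*c*real \<tau>*\<rho>)))"
      by (rule sc[OF eta_pos e2])
    have R3: "norm (\<theta>t (Suc \<tau>) - \<theta> (Suc \<tau>)) \<le> \<eta>*\<gamma>*(\<epsilon>+\<epsilon>0+D*real (Suc \<tau>))*real (Suc \<tau>)*\<rho>"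
    proof -
      have "norm (\<theta>t (Suc \<tau>) - \<theta> (Suc \<tau>)) \<le> \<eta>*\<gamma>*(\<epsilon>+\<epsilon>0+D*real \<tau>)*real \<tau>*\<rho>
           + \<eta> * ((\<epsilon>0 + \<epsilon>/2) * (\<gamma> * \<rho>)) + \<eta> * (\<beta> * (\<gamma> * (2*c*real \<tau>*\<rho>)))"
        unfolding d_eq using I3 nD1 nD2 tri3[of "\<theta>t \<tau> - \<theta> \<tau>" "\<eta> *\<^sub>R (transpose (J - Jt) *v (transpose A *v rt \<tau>))" "\<eta> *\<^sub>R (transpose Jt *v (transpose A *v e))"] by linarith
      also have "\<dots> = \<eta>*\<gamma>*(\<epsilon>+\<epsilon>0+D*real (Suc \<tau>))*real (Suc \<tau>)*\<rho> - \<eta>*\<gamma>*\<rho>*(\<epsilon>/2 + D)"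
        by (simp add: DC algebra_simps power2_eq_square)
      also have "\<dots> \<le> \<eta>*\<gamma>*(\<epsilon>+\<epsilon>0+D*real (Suc \<tau>))*real (Suc \<tau>)*\<rho>"
        using eta_pos g0 rho0 c0 A3_pos by simp
      finally show ?thesis .
    qed
    have R1: "norm (\<theta> (Suc \<tau>) - \<theta>0) \<le> R/2"
    proof -
      have "norm (\<theta> (Suc \<tau>) - \<theta>0) \<le> norm (\<theta>t (Suc \<tau>) - \<theta>0) + norm (\<theta>t (Suc \<tau>) - \<theta> (Suc \<tau>))"
        using norm_triangle_ineq4[of "\<theta>t (Suc \<tau>) - \<theta>0" "\<theta>t (Suc \<tau>) - \<theta> (Suc \<tau>)"] by simp
      also have "norm (\<theta>t (Suc \<tau>) - \<theta>0) \<le> sqrt (real T) * sqrt \<eta> * \<rho>"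
      proof -
        have "norm (\<theta>t (Suc \<tau>) - \<theta>0)^2 \<le> real (Suc \<tau>) * \<eta> * \<rho>^2"
        proof -
          have "real (Suc \<tau>) * \<eta> * (\<rho>^2 - norm (rt (Suc \<tau>))^2) \<le> real (Suc \<tau>) * \<eta> * \<rho>^2"
            by (rule mult_left_mono) (use eta_pos in auto)
          then show ?thesis using R6 by linarith
        qed
        also have "\<dots> \<le> real T * \<eta> * \<rho>^2" using ST eta_pos
          by (intro mult_right_mono) (auto)
        also have "\<dots> = (sqrt (real T) * sqrt \<eta> * \<rho>)^2" using eta_pos by (simp add: power_mult_distrib)
        finally show ?thesis by (rule sq_le) (use rho0 eta_pos in simp)
      qed
      also have "\<eta>*\<gamma>*(\<epsilon>+\<epsilon>0+D*real (Suc \<tau>))*real (Suc \<tau>)*\<rho> \<le> \<eta>*\<gamma>*(\<epsilon>+\<epsilon>0+D*real T)*real T*\<rho>"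
        using ST eta_pos g0 rho0 c0 A2_pos A3_pos
        by (intro mult_right_mono mult_mono mult_left_mono add_left_mono) auto
      then have "norm (\<theta>t (Suc \<tau>) - \<theta> (Suc \<tau>)) \<le> \<eta>*\<gamma>*(\<epsilon>+\<epsilon>0+D*real T)*real T*\<rho>" using R3 by linarith
      then have "sqrt (real T) * sqrt \<eta> * \<rho> + norm (\<theta>t (Suc \<tau>) - \<theta> (Suc \<tau>))
          \<le> \<rho> * (sqrt (real T) * (sqrt \<eta> + \<eta> * \<gamma> * sqrt (real T) *
               (\<epsilon> + \<epsilon>0 + \<eta> * \<gamma>^2 * \<beta> * (\<epsilon>0^2 + \<epsilon> * \<beta>) * real T)))"
      proof -
        have sT: "sqrt (real T) * sqrt (real T) = real T" by simp
        have eqq: "\<And>q::real. \<rho> * (q * (sqrt \<eta> + \<eta> * \<gamma> * q *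
               (\<epsilon> + \<epsilon>0 + \<eta> * \<gamma>^2 * \<beta> * (\<epsilon>0^2 + \<epsilon> * \<beta>) * real T)))
           = q * sqrt \<eta> * \<rho> + \<eta>*\<gamma>*(\<epsilon>+\<epsilon>0+D*real T)*(q * q)*\<rho>"
          by (simp add: D_def algebra_simps)
        show ?thesis using eqq[of "sqrt (real T)"] unfolding sT using \<open>norm (\<theta>t (Suc \<tau>) - \<theta> (Suc \<tau>)) \<le> \<eta>*\<gamma>*(\<epsilon>+\<epsilon>0+D*real T)*real T*\<rho>\<close> by linarith
      qed
      also have "\<dots> \<le> R/2" by (rule Rb2)
      finally show ?thesis by simp
    qed
    show ?thesis unfolding Q_def using R1 R2 R3 R4 R5 R6 by blast
  qed
  have all: "\<tau> \<le> T \<longrightarrow> Q \<tau>" for \<tau>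
  proof (induction \<tau>)
    case 0 show ?case using Q0 by simp
  next
    case (Suc n) then show ?case using step by auto
  qed
  show ?thesis
  proof (intro allI impI)
    fix \<tau> assume "\<tau> \<le> T"
    then have "Q \<tau>" using all by blast
    then have q: "norm (\<theta> \<tau> - \<theta>0) \<le> R/2" "norm (rt \<tau> - r \<tau>) \<le> 2*c*real \<tau>*\<rho>"
      "norm (\<theta>t \<tau> - \<theta> \<tau>) \<le> \<eta>*\<gamma>*(\<epsilon>+\<epsilon>0+D*real \<tau>)*real \<tau>*\<rho>" unfolding Q_def by auto
    note q' = q[unfolded rt_def r_def c_def D_def \<rho>_def mult.assoc]
    show "norm (\<theta> \<tau> - \<theta>0) \<le> R / 2 \<and>
     norm ((A *v f \<theta>0 + A *v (J *v (\<theta>t \<tau> - \<theta>0)) - y) - (A *v f (\<theta> \<tau>) - y))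
        \<le> 2 * \<eta> * \<gamma>^2 * (\<epsilon>0^2 + \<beta> * \<epsilon>) * real \<tau> * norm (A *v f \<theta>0 - y) \<and>
     norm (\<theta>t \<tau> - \<theta> \<tau>)
        \<le> \<eta> * \<gamma> * (\<epsilon> + \<epsilon>0 + \<eta> * \<gamma>^2 * \<beta> * (\<epsilon>0^2 + \<epsilon> * \<beta>) * real \<tau>) * real \<tau> * norm (A *v f \<theta>0 - y)"
      unfolding mult.assoc using q' by blast
  qed
qed

end
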